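(* Let $P$ be a polyhedral map, let $B^u_P$ be the barycentric subdivision $B_P$ with the vertex colours removed, and let $S_i(B_P)$ be the set of automorphisms of $B^u_P$ that map every vertex of (former) colour 0 to a vertex of colour 2 and every vertex of colour 2 to a vertex of colour 0, and map vertices of colour 1 to vertices of colour 1. Then the elements of the group $\mathrm{Aut}(B^u_P)$ are exactly the permutations in $\mathrm{Aut}(B_P)\cup S_i(B_P)$, where $\mathrm{Aut}(B_P)$ is the group of colour-preserving automorphisms of $B_P$.
   Context: A polyhedral map is a 3-connected graph embedded in a closed orientable surface such that every face is an open disc and the closures of any two faces have connected intersection. The barycentric subdivision $B_P$ of $P$ is obtained by adding a vertex inside every face and on every edge and joining each face-vertex to all vertices and edge-vertices on that face's boundary, so that all faces are triangles; original vertices get colour 0, edge-vertices colour 1, face-vertices colour 2. Automorphisms of $B_P$ as a coloured map preserve colours. *)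

theory Defs
  imports Main
begin

text \<open>Combinatorial (flag-system) model of a map on a closed surface. Vertices, edges and faces are
  the orbits of the subgroups generated by (r1,r2), (r0,r2), (r0,r1).
  Two elements are incident iff their orbits share a flag.\<close>

definition gen_orb :: "('f \<Rightarrow> 'f) list \<Rightarrow> 'f \<Rightarrow> 'f set" where
  "gen_orb fs x = {y. (x, y) \<in> {(a, g a) | a g. g \<in> set fs}\<^sup>*}"

definition is_map :: "'f set \<Rightarrow> ('f \<Rightarrow> 'f) \<Rightarrow> ('f \<Rightarrow> 'f) \<Rightarrow> ('f \<Rightarrow> 'f) \<Rightarrow> bool" where
  "is_map \<Phi> r0 r1 r2 \<longleftrightarrow>
     finite \<Phi> \<and> \<Phi> \<noteq> {} \<and>
     (\<forall>r \<in> {r0, r1, r2}. \<forall>x \<in> \<Phi>. r x \<in> \<Phi> \<and> r x \<noteq> x \<and> r (r x) = x) \<and>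
     (\<forall>x \<in> \<Phi>. r0 (r2 x) = r2 (r0 x) \<and> r0 x \<noteq> r2 x) \<and>
     (\<forall>x \<in> \<Phi>. \<forall>y \<in> \<Phi>. y \<in> gen_orb [r0, r1, r2] x)"

definition orientable_map :: "'f set \<Rightarrow> ('f \<Rightarrow> 'f) \<Rightarrow> ('f \<Rightarrow> 'f) \<Rightarrow> ('f \<Rightarrow> 'f) \<Rightarrow> bool" where
  "orientable_map \<Phi> r0 r1 r2 \<longleftrightarrow>
     (\<exists>c :: 'f \<Rightarrow> bool. \<forall>x \<in> \<Phi>. c (r0 x) \<noteq> c x \<and> c (r1 x) \<noteq> c x \<and> c (r2 x) \<noteq> c x)"

definition map_vertices :: "'f set \<Rightarrow> ('f \<Rightarrow> 'f) \<Rightarrow> ('f \<Rightarrow> 'f) \<Rightarrow> ('f \<Rightarrow> 'f) \<Rightarrow> 'f set set" where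
  "map_vertices \<Phi> r0 r1 r2 = gen_orb [r1, r2] ` \<Phi>"

definition map_edges :: "'f set \<Rightarrow> ('f \<Rightarrow> 'f) \<Rightarrow> ('f \<Rightarrow> 'f) \<Rightarrow> ('f \<Rightarrow> 'f) \<Rightarrow> 'f set set" where
  "map_edges \<Phi> r0 r1 r2 = gen_orb [r0, r2] ` \<Phi>"

definition map_faces :: "'f set \<Rightarrow> ('f \<Rightarrow> 'f) \<Rightarrow> ('f \<Rightarrow> 'f) \<Rightarrow> ('f \<Rightarrow> 'f) \<Rightarrow> 'f set set" where
  "map_faces \<Phi> r0 r1 r2 = gen_orb [r0, r1] ` \<Phi>"

definition edge_ends :: "'f set \<Rightarrow> ('f \<Rightarrow> 'f) \<Rightarrow> ('f \<Rightarrow> 'f) \<Rightarrow> ('f \<Rightarrow> 'f) \<Rightarrow> 'f set \<Rightarrow> 'f set set" where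
  "edge_ends \<Phi> r0 r1 r2 e = {v \<in> map_vertices \<Phi> r0 r1 r2. v \<inter> e \<noteq> {}}"

definition map_adj :: "'f set \<Rightarrow> ('f \<Rightarrow> 'f) \<Rightarrow> ('f \<Rightarrow> 'f) \<Rightarrow> ('f \<Rightarrow> 'f) \<Rightarrow> 'f set \<Rightarrow> 'f set \<Rightarrow> bool" where
  "map_adj \<Phi> r0 r1 r2 u w \<longleftrightarrow> (\<exists>e \<in> map_edges \<Phi> r0 r1 r2. edge_ends \<Phi> r0 r1 r2 e = {u, w})"

definition three_connected_map :: "'f set \<Rightarrow> ('f \<Rightarrow> 'f) \<Rightarrow> ('f \<Rightarrow> 'f) \<Rightarrow> ('f \<Rightarrow> 'f) \<Rightarrow> bool" where
  "three_connected_map \<Phi> r0 r1 r2 \<longleftrightarrow>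
     (let V = map_vertices \<Phi> r0 r1 r2; E = map_edges \<Phi> r0 r1 r2 in
       card V \<ge> 4 \<and>
       (\<forall>e \<in> E. card (edge_ends \<Phi> r0 r1 r2 e) = 2) \<and>
       inj_on (edge_ends \<Phi> r0 r1 r2) E \<and>
       (\<forall>S \<subseteq> V. card S \<le> 2 \<longrightarrow>
          (\<forall>u \<in> V - S. \<forall>w \<in> V - S.
             (u, w) \<in> {(a, b). a \<in> V - S \<and> b \<in> V - S \<and> map_adj \<Phi> r0 r1 r2 a b}\<^sup>*)))"

text \<open>Closures of any two distinct faces have connected intersection: the common
  vertices are connected through common edges (the intersection of the closures
  is exactly the union of the common vertices and the closed common edges).\<close>
definition faces_meet_properly :: "'f set \<Rightarrow> ('f \<Rightarrow> 'f) \<Rightarrow> ('f \<Rightarrow> 'f) \<Rightarrow> ('f \<Rightarrow> 'f) \<Rightarrow> bool" where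
  "faces_meet_properly \<Phi> r0 r1 r2 \<longleftrightarrow>
     (\<forall>f \<in> map_faces \<Phi> r0 r1 r2. \<forall>g \<in> map_faces \<Phi> r0 r1 r2. f \<noteq> g \<longrightarrow>
        (let CV = {v \<in> map_vertices \<Phi> r0 r1 r2. v \<inter> f \<noteq> {} \<and> v \<inter> g \<noteq> {}};
             CE = {e \<in> map_edges \<Phi> r0 r1 r2. e \<inter> f \<noteq> {} \<and> e \<inter> g \<noteq> {}} in
         \<forall>u \<in> CV. \<forall>w \<in> CV.
           (u, w) \<in> {(a, b). \<exists>e \<in> CE. edge_ends \<Phi> r0 r1 r2 e = {a, b}}\<^sup>*))"

definition polyhedral_map :: "'f set \<Rightarrow> ('f \<Rightarrow> 'f) \<Rightarrow> ('f \<Rightarrow> 'f) \<Rightarrow> ('f \<Rightarrow> 'f) \<Rightarrow> bool" where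
  "polyhedral_map \<Phi> r0 r1 r2 \<longleftrightarrow>
     is_map \<Phi> r0 r1 r2 \<and> orientable_map \<Phi> r0 r1 r2 \<and>
     three_connected_map \<Phi> r0 r1 r2 \<and> faces_meet_properly \<Phi> r0 r1 r2"

text \<open>Barycentric subdivision: vertices are colour-tagged elements
  (0 = vertex, 1 = edge, 2 = face); triangles correspond to flags.\<close>
definition bary_verts :: "'f set \<Rightarrow> ('f \<Rightarrow> 'f) \<Rightarrow> ('f \<Rightarrow> 'f) \<Rightarrow> ('f \<Rightarrow> 'f) \<Rightarrow> (nat \<times> 'f set) set" where
  "bary_verts \<Phi> r0 r1 r2 =
     ({0} \<times> map_vertices \<Phi> r0 r1 r2) \<union> ({1} \<times> map_edges \<Phi> r0 r1 r2) \<union> ({2} \<times> map_faces \<Phi> r0 r1 r2)"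

definition bary_tris :: "'f set \<Rightarrow> ('f \<Rightarrow> 'f) \<Rightarrow> ('f \<Rightarrow> 'f) \<Rightarrow> ('f \<Rightarrow> 'f) \<Rightarrow> (nat \<times> 'f set) set set" where
  "bary_tris \<Phi> r0 r1 r2 =
     (\<lambda>x. {(0, gen_orb [r1, r2] x), (1, gen_orb [r0, r2] x), (2, gen_orb [r0, r1] x)}) ` \<Phi>"

definition bary_aut_uncol :: "'f set \<Rightarrow> ('f \<Rightarrow> 'f) \<Rightarrow> ('f \<Rightarrow> 'f) \<Rightarrow> ('f \<Rightarrow> 'f) \<Rightarrow> ((nat \<times> 'f set) \<Rightarrow> (nat \<times> 'f set)) set" where
  "bary_aut_uncol \<Phi> r0 r1 r2 =
     {\<pi>. bij_betw \<pi> (bary_verts \<Phi> r0 r1 r2) (bary_verts \<Phi> r0 r1 r2) \<and>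
         (\<forall>x. x \<notin> bary_verts \<Phi> r0 r1 r2 \<longrightarrow> \<pi> x = x) \<and>
         (\<lambda>T. \<pi> ` T) ` bary_tris \<Phi> r0 r1 r2 = bary_tris \<Phi> r0 r1 r2}"

definition bary_aut_col :: "'f set \<Rightarrow> ('f \<Rightarrow> 'f) \<Rightarrow> ('f \<Rightarrow> 'f) \<Rightarrow> ('f \<Rightarrow> 'f) \<Rightarrow> ((nat \<times> 'f set) \<Rightarrow> (nat \<times> 'f set)) set" where
  "bary_aut_col \<Phi> r0 r1 r2 =
     {\<pi> \<in> bary_aut_uncol \<Phi> r0 r1 r2. \<forall>x \<in> bary_verts \<Phi> r0 r1 r2. fst (\<pi> x) = fst x}"

definition bary_aut_swap :: "'f set \<Rightarrow> ('f \<Rightarrow> 'f) \<Rightarrow> ('f \<Rightarrow> 'f) \<Rightarrow> ('f \<Rightarrow> 'f) \<Rightarrow> ((nat \<times> 'f set) \<Rightarrow> (nat \<times> 'f set)) set" where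
  "bary_aut_swap \<Phi> r0 r1 r2 =
     {\<pi> \<in> bary_aut_uncol \<Phi> r0 r1 r2. \<forall>x \<in> bary_verts \<Phi> r0 r1 r2.
        (fst x = 0 \<longrightarrow> fst (\<pi> x) = 2) \<and> (fst x = 2 \<longrightarrow> fst (\<pi> x) = 0) \<and>
        (fst x = 1 \<longrightarrow> fst (\<pi> x) = 1)}"

end

theory Submission
  imports Defs
begin
lemma gen_orb_induct[consumes 1]:
  assumes "y \<in> gen_orb fs x" "P x"
    "\<And>z g. z \<in> gen_orb fs x \<Longrightarrow> P z \<Longrightarrow> g \<in> set fs \<Longrightarrow> P (g z)"
  shows "P y"
proof -
  have "(x,y) \<in> {(a, g a) | a g. g \<in> set fs}\<^sup>*" using assms(1) unfolding gen_orb_def by simp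
  then show ?thesis
  proof (induction rule: rtrancl_induct)
    case base show ?case by fact
  next
    case (step z w)
    then obtain g where g: "g \<in> set fs" "w = g z" by auto
    have "z \<in> gen_orb fs x" using step(1) unfolding gen_orb_def by simp
    then show ?case using assms(3) step g by blast
  qed
qed

lemma gen_orb_self: "x \<in> gen_orb fs x" by (simp add: gen_orb_def)

lemma gen_orb_step: "y \<in> gen_orb fs x \<Longrightarrow> g \<in> set fs \<Longrightarrow> g y \<in> gen_orb fs x"
  unfolding gen_orb_def by (auto intro: rtrancl_into_rtrancl)

lemma gen_orb_trans: "y \<in> gen_orb fs x \<Longrightarrow> z \<in> gen_orb fs y \<Longrightarrow> z \<in> gen_orb fs x"
  unfolding gen_orb_def by (auto intro: rtrancl_trans)

locale gorb =
  fixes \<Phi> :: "'f set" and fs :: "('f \<Rightarrow> 'f) list"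
  assumes H: "\<And>g x. g \<in> set fs \<Longrightarrow> x \<in> \<Phi> \<Longrightarrow> g x \<in> \<Phi> \<and> g (g x) = x"
begin

lemma sub: "x \<in> \<Phi> \<Longrightarrow> gen_orb fs x \<subseteq> \<Phi>"
proof
  fix y assume xP: "x \<in> \<Phi>" and yx: "y \<in> gen_orb fs x"
  from yx show "y \<in> \<Phi>" using xP by (induction rule: gen_orb_induct) (use H in auto)
qed

lemma sym: assumes "x \<in> \<Phi>" "y \<in> gen_orb fs x" shows "x \<in> gen_orb fs y"
  using assms(2)
proof (induction rule: gen_orb_induct)
  case 1 show ?case by (rule gen_orb_self)
next
  case (2 z g)
  note zx = \<open>z \<in> gen_orb fs x\<close> and g = \<open>g \<in> set fs\<close> and ih = \<open>x \<in> gen_orb fs z\<close>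
  have zP: "z \<in> \<Phi>" using sub[OF assms(1)] zx by blast
  have "g (g z) \<in> gen_orb fs (g z)" by (rule gen_orb_step[OF gen_orb_self g])
  then have "z \<in> gen_orb fs (g z)" using H[OF g zP] by simp
  then show ?case by (rule gen_orb_trans[OF _ ih])
qed

lemma eq: assumes "x \<in> \<Phi>" "y \<in> gen_orb fs x" shows "gen_orb fs y = gen_orb fs x"
proof
  show "gen_orb fs y \<subseteq> gen_orb fs x" using gen_orb_trans[OF assms(2)] by blast
  show "gen_orb fs x \<subseteq> gen_orb fs y" using gen_orb_trans[OF sym[OF assms]] by blast
qed

lemma disj: assumes "x \<in> \<Phi>" "y \<in> \<Phi>" "z \<in> gen_orb fs x" "z \<in> gen_orb fs y"
  shows "gen_orb fs x = gen_orb fs y"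
proof -
  have "gen_orb fs z = gen_orb fs x" by (rule eq[OF assms(1,3)])
  moreover have "gen_orb fs z = gen_orb fs y" by (rule eq[OF assms(2,4)])
  ultimately show ?thesis by simp
qed

end


locale pm =
  fixes \<Phi> :: "'f set" and r0 r1 r2 :: "'f \<Rightarrow> 'f"
  assumes ism: "is_map \<Phi> r0 r1 r2" and tc: "three_connected_map \<Phi> r0 r1 r2"
begin

abbreviation "vo \<equiv> gen_orb [r1, r2]"
abbreviation "eo \<equiv> gen_orb [r0, r2]"
abbreviation "fo \<equiv> gen_orb [r0, r1]"
abbreviation "VV \<equiv> map_vertices \<Phi> r0 r1 r2"
abbreviation "EE \<equiv> map_edges \<Phi> r0 r1 r2"
abbreviation "FF \<equiv> map_faces \<Phi> r0 r1 r2"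
abbreviation "ends \<equiv> edge_ends \<Phi> r0 r1 r2"

lemma finP: "finite \<Phi>" and neP: "\<Phi> \<noteq> {}"
  using ism unfolding is_map_def by auto

lemma i0: "x \<in> \<Phi> \<Longrightarrow> r0 x \<in> \<Phi> \<and> r0 x \<noteq> x \<and> r0 (r0 x) = x"
  and i1: "x \<in> \<Phi> \<Longrightarrow> r1 x \<in> \<Phi> \<and> r1 x \<noteq> x \<and> r1 (r1 x) = x"
  and i2: "x \<in> \<Phi> \<Longrightarrow> r2 x \<in> \<Phi> \<and> r2 x \<noteq> x \<and> r2 (r2 x) = x"
  using ism unfolding is_map_def by auto

lemma comm: "x \<in> \<Phi> \<Longrightarrow> r0 (r2 x) = r2 (r0 x)"
  using ism unfolding is_map_def by auto

lemma transit: "x \<in> \<Phi> \<Longrightarrow> y \<in> \<Phi> \<Longrightarrow> y \<in> gen_orb [r0, r1, r2] x"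
  using ism unfolding is_map_def by auto

lemma tcV: "card VV \<ge> 4"
  and tcE: "e \<in> EE \<Longrightarrow> card (ends e) = 2"
  and tcI: "inj_on ends EE"
  and tcC: "S \<subseteq> VV \<Longrightarrow> card S \<le> 2 \<Longrightarrow> u \<in> VV - S \<Longrightarrow> w \<in> VV - S \<Longrightarrow>
     (u, w) \<in> {(a, b). a \<in> VV - S \<and> b \<in> VV - S \<and> map_adj \<Phi> r0 r1 r2 a b}\<^sup>*"
  using tc unfolding three_connected_map_def Let_def by auto

sublocale OV: gorb \<Phi> "[r1, r2]" using i1 i2 by unfold_locales auto
sublocale OE: gorb \<Phi> "[r0, r2]" using i0 i2 by unfold_locales auto
sublocale OFa: gorb \<Phi> "[r0, r1]" using i0 i1 by unfold_locales auto

lemma vo_r1: "x \<in> \<Phi> \<Longrightarrow> vo (r1 x) = vo x" by (rule OV.eq) (auto intro: gen_orb_step gen_orb_self)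
lemma vo_r2: "x \<in> \<Phi> \<Longrightarrow> vo (r2 x) = vo x" by (rule OV.eq) (auto intro: gen_orb_step gen_orb_self)
lemma eo_r0: "x \<in> \<Phi> \<Longrightarrow> eo (r0 x) = eo x" by (rule OE.eq) (auto intro: gen_orb_step gen_orb_self)
lemma eo_r2: "x \<in> \<Phi> \<Longrightarrow> eo (r2 x) = eo x" by (rule OE.eq) (auto intro: gen_orb_step gen_orb_self)
lemma fo_r0: "x \<in> \<Phi> \<Longrightarrow> fo (r0 x) = fo x" by (rule OFa.eq) (auto intro: gen_orb_step gen_orb_self)
lemma fo_r1: "x \<in> \<Phi> \<Longrightarrow> fo (r1 x) = fo x" by (rule OFa.eq) (auto intro: gen_orb_step gen_orb_self)

lemma eo_sub: assumes "x \<in> \<Phi>" shows "eo x \<subseteq> {x, r0 x, r2 x, r0 (r2 x)}"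
proof
  fix y assume "y \<in> eo x"
  then show "y \<in> {x, r0 x, r2 x, r0 (r2 x)}"
  proof (induction rule: gen_orb_induct)
    case 1 then show ?case by simp
  next
    case (2 z g)
    then show ?case using i0 i2 comm assms by auto
  qed
qed

lemma eo_card: "x \<in> \<Phi> \<Longrightarrow> card (eo x) \<le> 4"
proof -
  assume x: "x \<in> \<Phi>"
  have "card (eo x) \<le> card {x, r0 x, r2 x, r0 (r2 x)}"
    by (rule card_mono) (auto simp: eo_sub x)
  also have "\<dots> \<le> 4" by (simp add: card_insert_if)
  finally show ?thesis .
qed

lemma ends_eo: assumes x: "x \<in> \<Phi>" shows "ends (eo x) = {vo x, vo (r0 x)}"
proof
  show "{vo x, vo (r0 x)} \<subseteq> ends (eo x)"
  proof -
    have a: "x \<in> vo x" "x \<in> eo x" "r0 x \<in> vo (r0 x)" by (auto intro: gen_orb_self)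
    have b: "r0 x \<in> eo x" by (rule gen_orb_step[OF gen_orb_self]) simp
    show ?thesis using x i0[OF x] a b unfolding edge_ends_def map_vertices_def by blast
  qed
next
  show "ends (eo x) \<subseteq> {vo x, vo (r0 x)}"
  proof
    fix v assume "v \<in> ends (eo x)"
    then obtain y z where y: "y \<in> \<Phi>" "v = vo y" and z: "z \<in> vo y" "z \<in> eo x"
      unfolding edge_ends_def map_vertices_def by auto
    have "vo y = vo z" using OV.eq[OF y(1) z(1)] by simp
    moreover have "z \<in> {x, r0 x, r2 x, r0 (r2 x)}" using eo_sub[OF x] z(2) by blast
    moreover have "vo (r2 x) = vo x" using vo_r2 x by simp
    moreover have "vo (r0 (r2 x)) = vo (r0 x)" using vo_r2 i0 x comm by metis
    ultimately show "v \<in> {vo x, vo (r0 x)}" using y by auto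
  qed
qed

lemma eoE: "x \<in> \<Phi> \<Longrightarrow> eo x \<in> EE" unfolding map_edges_def by auto

lemma vo_r0_ne: assumes x: "x \<in> \<Phi>" shows "vo (r0 x) \<noteq> vo x"
  using tcE[OF eoE[OF x]] ends_eo[OF x] by auto

end

lemma six_card:
  assumes "a1 \<noteq> b1" "a2 \<noteq> b2" "a3 \<noteq> b3" "a1 \<in> A1" "b1 \<in> A1" "a2 \<in> A2" "b2 \<in> A2"
    "a3 \<in> A3" "b3 \<in> A3" "A1 \<inter> A2 = {}" "A1 \<inter> A3 = {}" "A2 \<inter> A3 = {}"
    "{a1, b1, a2, b2, a3, b3} \<subseteq> B" "finite B"
  shows "6 \<le> card B"
proof -
  have "card {a1, b1, a2, b2, a3, b3} = 6" using assms(1-12) by (auto simp: card_insert_if)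
  then show ?thesis using card_mono[OF assms(14,13)] by simp
qed

context pm begin

lemma finV: "finite VV" unfolding map_vertices_def using finP by simp
lemma finE: "finite EE" unfolding map_edges_def using finP by simp
lemma finF: "finite FF" unfolding map_faces_def using finP by simp

lemma vo_card: assumes x: "x \<in> \<Phi>" shows "6 \<le> card (vo x)"
proof -
  define v where "v = vo x"
  have vV: "v \<in> VV" unfolding v_def map_vertices_def using x by simp
  define S where "S = {w \<in> VV. w \<noteq> v \<and> (\<exists>e\<in>EE. ends e = {v,w})}"
  have finS: "finite S" unfolding S_def using finV by simp
  show ?thesis
  proof (cases "3 \<le> card S")
    case True
    then obtain T where "T \<subseteq> S" "card T = 3" by (rule obtain_subset_with_card_n)
    then obtain w1 w2 w3 where w: "w1 \<in> S" "w2 \<in> S" "w3 \<in> S" "w1 \<noteq> w2" "w2 \<noteq> w3" "w1 \<noteq> w3"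
      unfolding card_3_iff by auto
    have edge: "\<exists>e y. e \<in> EE \<and> ends e = {v, w} \<and> y \<in> \<Phi> \<and> y \<in> v \<and> eo y = e" if "w \<in> S" for w
    proof -
      obtain e where e: "e \<in> EE" "ends e = {v,w}" using \<open>w \<in> S\<close> unfolding S_def by auto
      then have "v \<inter> e \<noteq> {}" unfolding edge_ends_def by auto
      then obtain y where y: "y \<in> v" "y \<in> e" by auto
      obtain z where z: "z \<in> \<Phi>" "e = eo z" using e(1) unfolding map_edges_def by auto
      have yP: "y \<in> \<Phi>" using OE.sub[OF z(1)] y z by auto
      have "eo y = e" using OE.eq[OF z(1)] y(2) z(2) by simp
      then show ?thesis using e y yP by blast
    qed
    obtain e1 y1 where 1: "e1 \<in> EE" "ends e1 = {v, w1}" "y1 \<in> \<Phi>" "y1 \<in> v" "eo y1 = e1"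
      using edge[OF w(1)] by blast
    obtain e2 y2 where 2: "e2 \<in> EE" "ends e2 = {v, w2}" "y2 \<in> \<Phi>" "y2 \<in> v" "eo y2 = e2"
      using edge[OF w(2)] by blast
    obtain e3 y3 where 3: "e3 \<in> EE" "ends e3 = {v, w3}" "y3 \<in> \<Phi>" "y3 \<in> v" "eo y3 = e3"
      using edge[OF w(3)] by blast
    have wv: "w1 \<noteq> v" "w2 \<noteq> v" "w3 \<noteq> v" using w unfolding S_def by auto
    have dj: "eo a \<inter> eo b = {}" if "a \<in> \<Phi>" "b \<in> \<Phi>" "eo a \<noteq> eo b" for a b
      using OE.disj[OF that(1,2)] that(3) by blast
    have ne: "e1 \<noteq> e2" "e1 \<noteq> e3" "e2 \<noteq> e3"
      using 1(2) 2(2) 3(2) w(4-6) wv by (auto simp: doubleton_eq_iff)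
    have r2v: "r2 y \<in> v" if "y \<in> v" for y
      using that unfolding v_def by (auto intro: gen_orb_step)
    have r2e: "r2 y \<in> eo y" for y by (auto intro: gen_orb_step gen_orb_self)
    have ds: "y1 \<noteq> r2 y1" "y2 \<noteq> r2 y2" "y3 \<noteq> r2 y3" using i2 1(3) 2(3) 3(3) by metis+
    have d12: "eo y1 \<inter> eo y2 = {}" using dj[OF 1(3) 2(3)] ne 1(5) 2(5) by simp
    have d13: "eo y1 \<inter> eo y3 = {}" using dj[OF 1(3) 3(3)] ne 1(5) 3(5) by simp
    have d23: "eo y2 \<inter> eo y3 = {}" using dj[OF 2(3) 3(3)] ne 2(5) 3(5) by simp
    have sb: "{y1, r2 y1, y2, r2 y2, y3, r2 y3} \<subseteq> vo x" using 1(4) 2(4) 3(4) r2v unfolding v_def by blast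
    have fin: "finite (vo x)" using OV.sub[OF x] finP finite_subset by blast
    show ?thesis unfolding v_def
      by (rule six_card[OF ds gen_orb_self r2e gen_orb_self r2e gen_orb_self r2e d12 d13 d23 sb fin])
  next
    case False
    have "card (insert v S) \<le> Suc (card S)" using finS by (simp add: card_insert_if)
    then have c3: "card (insert v S) \<le> 3" using False by linarith
    have "\<not> VV \<subseteq> insert v S"
    proof
      assume "VV \<subseteq> insert v S"
      then have "card VV \<le> card (insert v S)" by (rule card_mono[OF finite.insertI[OF finS]])
      then show False using tcV c3 by linarith
    qed
    then obtain w where w: "w \<in> VV" "w \<notin> S" "w \<noteq> v" by auto
    have SV: "S \<subseteq> VV" unfolding S_def by auto
    have vS: "v \<notin> S" unfolding S_def by auto
    have "(v, w) \<in> {(a, b). a \<in> VV - S \<and> b \<in> VV - S \<and> map_adj \<Phi> r0 r1 r2 a b}\<^sup>*"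
      using tcC[OF SV] False vV vS w by auto
    then obtain a where a: "a \<in> VV - S" "map_adj \<Phi> r0 r1 r2 v a"
      using w(3) by (cases rule: converse_rtranclE) auto
    then obtain e where e: "e \<in> EE" "ends e = {v, a}" unfolding map_adj_def by auto
    have "a \<noteq> v" using tcE[OF e(1)] e(2) by auto
    then have "a \<in> S" using a e unfolding S_def by auto
    then show ?thesis using a by auto
  qed
qed

lemma L1: assumes y: "y \<in> \<Phi>" shows "eo (r1 y) \<noteq> eo y"
proof
  assume eq: "eo (r1 y) = eo y"
  have "r1 y \<in> eo (r1 y)" by (rule gen_orb_self)
  then have "r1 y \<in> eo y" using eq by simp
  then have "r1 y \<in> {y, r0 y, r2 y, r0 (r2 y)}" using eo_sub[OF y] by blast
  moreover {
    assume h: "r1 y = r0 y"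
    have False using vo_r1[OF y] h vo_r0_ne[OF y] by simp }
  moreover {
    assume h: "r1 y = r2 y"
    have "vo y \<subseteq> {y, r1 y}"
    proof
      fix z assume "z \<in> vo y"
      then show "z \<in> {y, r1 y}"
      proof (induction rule: gen_orb_induct)
        case 1 show ?case by simp
      next
        case (2 z g)
        have f: "r1 (r1 y) = y" "r2 y = r1 y" "r2 (r1 y) = y" using i1[OF y] i2[OF y] h by metis+
        show ?case using 2 f by auto
      qed
    qed
    then have "card (vo y) \<le> card {y, r1 y}" by (rule card_mono[rotated]) simp
    also have "card {y, r1 y} \<le> 2" by (simp add: card_insert_if)
    finally have "card (vo y) \<le> 2" .
    then have False using vo_card[OF y] by simp }
  moreover {
    assume h: "r1 y = r0 (r2 y)"
    have "vo y = vo (r1 y)" using vo_r1[OF y] by simp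
    also have "\<dots> = vo (r2 (r0 y))" using h comm[OF y] by simp
    also have "\<dots> = vo (r0 y)" using vo_r2 i0 y by blast
    finally have "vo y = vo (r0 y)" .
    then have False using vo_r0_ne[OF y] by simp }
  ultimately show False using i1[OF y] by auto
qed

lemma L2: assumes x: "x \<in> \<Phi>" shows "eo (r1 (r0 x)) \<noteq> eo (r1 x)"
proof
  assume eq: "eo (r1 (r0 x)) = eo (r1 x)"
  have x1: "r1 x \<in> \<Phi>" "r0 x \<in> \<Phi>" "r1 (r0 x) \<in> \<Phi>" using i0 i1 x by auto
  have a: "vo x \<in> ends (eo (r1 x))" using ends_eo[OF x1(1)] vo_r1[OF x] by simp
  have b: "vo (r0 x) \<in> ends (eo (r1 x))" using ends_eo[OF x1(3)] vo_r1[OF x1(2)] eq by simp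
  have "card (ends (eo (r1 x))) = 2" using tcE eoE x1 by simp
  then have "ends (eo (r1 x)) = {vo x, vo (r0 x)}" using a b vo_r0_ne[OF x]
    unfolding card_2_iff by auto
  then have "ends (eo (r1 x)) = ends (eo x)" using ends_eo[OF x] by simp
  then have "eo (r1 x) = eo x" by (rule inj_onD[OF tcI _ eoE[OF x1(1)] eoE[OF x]])
  then show False using L1[OF x] by simp
qed

lemma fo_card: assumes x: "x \<in> \<Phi>" shows "6 \<le> card (fo x)"
proof -
  have x1: "r1 x \<in> \<Phi>" "r0 x \<in> \<Phi>" "r1 (r0 x) \<in> \<Phi>" using i0 i1 x by auto
  have dj: "eo a \<inter> eo b = {}" if "a \<in> \<Phi>" "b \<in> \<Phi>" "eo a \<noteq> eo b" for a b
    using OE.disj[OF that(1,2)] that(3) by blast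
  have r0e: "r0 y \<in> eo y" for y by (rule gen_orb_step[OF gen_orb_self]) simp
  have "eo x \<noteq> eo (r1 x)" using L1[OF x] by metis
  then have d12: "eo x \<inter> eo (r1 x) = {}" by (rule dj[OF x x1(1)])
  have "eo x \<noteq> eo (r1 (r0 x))" using L1[OF x1(2)] eo_r0[OF x] by simp
  then have d13: "eo x \<inter> eo (r1 (r0 x)) = {}" by (rule dj[OF x x1(3)])
  have "eo (r1 x) \<noteq> eo (r1 (r0 x))" using L2[OF x] by metis
  then have d23: "eo (r1 x) \<inter> eo (r1 (r0 x)) = {}" by (rule dj[OF x1(1) x1(3)])
  have st: "g y \<in> fo x" if "y \<in> fo x" "g \<in> set [r0, r1]" for y g by (rule gen_orb_step[OF that])
  have xf: "x \<in> fo x" by (rule gen_orb_self)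
  have inF: "{x, r0 x, r1 x, r0 (r1 x), r1 (r0 x), r0 (r1 (r0 x))} \<subseteq> fo x"
    using xf st[of x r0] st[of x r1] st[of "r1 x" r0] st[of "r0 x" r1] st[of "r1 (r0 x)" r0] by simp
  have ds: "x \<noteq> r0 x" "r1 x \<noteq> r0 (r1 x)" "r1 (r0 x) \<noteq> r0 (r1 (r0 x))" using i0 x x1 by metis+
  have fin: "finite (fo x)" using OFa.sub[OF x] finP finite_subset by blast
  show ?thesis
    by (rule six_card[OF ds gen_orb_self r0e gen_orb_self r0e gen_orb_self r0e d12 d13 d23 inF fin])
qed

end

lemma card3_dist: "card {a,b,c} = 3 \<Longrightarrow> a \<noteq> b \<and> a \<noteq> c \<and> b \<noteq> c"
proof (intro conjI notI)
  assume h: "card {a,b,c} = 3"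
  have le: "card {x, y} \<le> 2" for x y :: 'a by (simp add: card_insert_if)
  { assume "a = b" then have "{a,b,c} = {b,c}" by simp then show False using h le[of b c] by simp }
  { assume "a = c" then have "{a,b,c} = {b,c}" by auto then show False using h le[of b c] by simp }
  { assume "b = c" then have "{a,b,c} = {a,c}" by simp then show False using h le[of a c] by simp }
qed
lemma dist012: "{a,b,c} = {0::nat,1,2} \<Longrightarrow> a \<noteq> b \<and> a \<noteq> c \<and> b \<noteq> c"
  by (rule card3_dist) simp
lemma perm3: "{a,b,c} = {0::nat,1,2} \<Longrightarrow> {a',b,c} = {0,1,2} \<Longrightarrow> a = a'"
proof -
  assume h1: "{a,b,c} = {0::nat,1,2}" and h2: "{a',b,c} = {0,1,2}"
  have d1: "a \<notin> {b,c}" using dist012[OF h1] by simp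
  have d2: "a' \<notin> {b,c}" using dist012[OF h2] by simp
  have "{a} = {a,b,c} - {b,c}" using d1 by blast
  also have "\<dots> = {a',b,c} - {b,c}" using h1 h2 by simp
  also have "\<dots> = {a'}" using d2 by blast
  finally show ?thesis by simp
qed
lemma permc: "{a,b,c} = {0::nat,1,2} \<Longrightarrow> b = 1 \<Longrightarrow> (a = 0 \<and> c = 2) \<or> (a = 2 \<and> c = 0)"
proof -
  assume h1: "{a,b,c} = {0::nat,1,2}" and b: "b = 1"
  have d: "a \<noteq> b" "a \<noteq> c" "b \<noteq> c" using dist012[OF h1] by auto
  have "a \<in> {0,1,2}" "c \<in> {0,1,2}" using h1 by blast+
  then have "a = 0 \<or> a = 2" "c = 0 \<or> c = 2" using d b by auto
  then show ?thesis using d by auto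
qed

context gorb begin
lemma card_sum: assumes "finite \<Phi>" shows "card \<Phi> = sum card (gen_orb fs ` \<Phi>)"
proof -
  have U: "\<Union>(gen_orb fs ` \<Phi>) = \<Phi>"
  proof
    show "\<Union>(gen_orb fs ` \<Phi>) \<subseteq> \<Phi>" using sub by blast
    show "\<Phi> \<subseteq> \<Union>(gen_orb fs ` \<Phi>)"
    proof
      fix x assume "x \<in> \<Phi>" then show "x \<in> \<Union>(gen_orb fs ` \<Phi>)" using gen_orb_self[of x fs] by blast
    qed
  qed
  have "pairwise disjnt (gen_orb fs ` \<Phi>)"
  proof (unfold pairwise_def disjnt_def, intro ballI impI)
    fix A B assume A: "A \<in> gen_orb fs ` \<Phi>" and B: "B \<in> gen_orb fs ` \<Phi>" and ne: "A \<noteq> B"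
    obtain a where a: "a \<in> \<Phi>" "A = gen_orb fs a" using A by blast
    obtain b where b: "b \<in> \<Phi>" "B = gen_orb fs b" using B by blast
    show "A \<inter> B = {}"
    proof (rule ccontr)
      assume "A \<inter> B \<noteq> {}"
      then obtain z where "z \<in> A" "z \<in> B" by blast
      then have "A = B" using disj[OF a(1) b(1)] a(2) b(2) by simp
      with ne show False by simp
    qed
  qed
  moreover have "finite A" if A: "A \<in> gen_orb fs ` \<Phi>" for A
  proof -
    obtain a where a: "a \<in> \<Phi>" "A = gen_orb fs a" using A by blast
    show ?thesis using sub[OF a(1)] a(2) assms finite_subset by blast
  qed
  ultimately have "card (\<Union>(gen_orb fs ` \<Phi>)) = sum card (gen_orb fs ` \<Phi>)" by (rule card_Union_disjoint)
  then show ?thesis using U by simp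
qed
end

context pm begin

lemma cntE: "card \<Phi> \<le> 4 * card EE"
proof -
  have "card \<Phi> = sum card EE" unfolding map_edges_def by (rule OE.card_sum[OF finP])
  also have "\<dots> \<le> card EE * 4"
  proof -
    have b: "\<And>e. e \<in> EE \<Longrightarrow> card e \<le> 4" using eo_card unfolding map_edges_def by auto
    show ?thesis using sum_bounded_above[of EE card 4, OF b] by simp
  qed
  finally show ?thesis by simp
qed

lemma cntV: "6 * card VV \<le> card \<Phi>"
proof -
  have "card VV * 6 \<le> sum card VV"
  proof -
    have b: "\<And>e. e \<in> VV \<Longrightarrow> 6 \<le> card e" using vo_card unfolding map_vertices_def by auto
    show ?thesis using sum_bounded_below[of VV 6 card, OF b] by simp
  qed
  also have "\<dots> = card \<Phi>" unfolding map_vertices_def by (rule OV.card_sum[OF finP, symmetric])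
  finally show ?thesis by simp
qed

lemma cntF: "6 * card FF \<le> card \<Phi>"
proof -
  have "card FF * 6 \<le> sum card FF"
  proof -
    have b: "\<And>e. e \<in> FF \<Longrightarrow> 6 \<le> card e" using fo_card unfolding map_faces_def by auto
    show ?thesis using sum_bounded_below[of FF 6 card, OF b] by simp
  qed
  also have "\<dots> = card \<Phi>" unfolding map_faces_def by (rule OFa.card_sum[OF finP, symmetric])
  finally show ?thesis by simp
qed

lemma FFpos: "0 < card FF" using finF neP unfolding map_faces_def by (simp add: card_gt_0_iff)

sublocale OA: gorb \<Phi> "[r0, r1, r2]" using i0 i1 i2 by unfold_locales auto

lemma main: "bary_aut_uncol \<Phi> r0 r1 r2 \<subseteq> bary_aut_col \<Phi> r0 r1 r2 \<union> bary_aut_swap \<Phi> r0 r1 r2"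
proof
  fix \<pi> assume pi: "\<pi> \<in> bary_aut_uncol \<Phi> r0 r1 r2"
  let ?BV = "bary_verts \<Phi> r0 r1 r2"
  have bij: "bij_betw \<pi> ?BV ?BV" and tr: "(\<lambda>T. \<pi> ` T) ` bary_tris \<Phi> r0 r1 r2 = bary_tris \<Phi> r0 r1 r2"
    using pi unfolding bary_aut_uncol_def by auto
  define T where "T x = {(0::nat, vo x), (1, eo x), (2, fo x)}" for x
  have tris: "bary_tris \<Phi> r0 r1 r2 = T ` \<Phi>" unfolding bary_tris_def T_def by simp
  define c0 where "c0 x = fst (\<pi> (0, vo x))" for x
  define c1 where "c1 x = fst (\<pi> (1, eo x))" for x
  define c2 where "c2 x = fst (\<pi> (2, fo x))" for x
  have perm: "{c0 x, c1 x, c2 x} = {0,1,2}" if x: "x \<in> \<Phi>" for x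
  proof -
    have "\<pi> ` T x \<in> T ` \<Phi>" using tr x unfolding tris by blast
    then obtain y where "\<pi> ` T x = T y" by auto
    then have "fst ` (\<pi> ` T x) = fst ` T y" by simp
    then show ?thesis unfolding T_def c0_def c1_def c2_def by simp
  qed
  define tri where "tri x = (c0 x, c1 x, c2 x)" for x
  have stp: "tri (g z) = tri z" if z: "z \<in> \<Phi>" and g: "g \<in> set [r0, r1, r2]" for z g
  proof -
    have gz: "g z \<in> \<Phi>" using OA.H[OF g z] by simp
    have P1: "{c0 z, c1 z, c2 z} = {0,1,2}" and P2: "{c0 (g z), c1 (g z), c2 (g z)} = {0,1,2}"
      using perm z gz by auto
    from g consider "g = r0" | "g = r1" | "g = r2" by auto
    then show ?thesis
    proof cases
      case 1
      have "c1 (g z) = c1 z" "c2 (g z) = c2 z" unfolding c1_def c2_def 1 using eo_r0 fo_r0 z by auto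
      moreover then have "c0 (g z) = c0 z" using perm3[OF P1] P2 by metis
      ultimately show ?thesis unfolding tri_def by simp
    next
      case 2
      have a: "c0 (g z) = c0 z" "c2 (g z) = c2 z" unfolding c0_def c2_def 2 using vo_r1 fo_r1 z by auto
      have "{c1 z, c0 z, c2 z} = {0,1,2}" "{c1 (g z), c0 z, c2 z} = {0,1,2}"
        using P1 P2 a by (auto simp: insert_commute)
      then have "c1 (g z) = c1 z" using perm3 by metis
      then show ?thesis using a unfolding tri_def by simp
    next
      case 3
      have a: "c0 (g z) = c0 z" "c1 (g z) = c1 z" unfolding c0_def c1_def 3 using vo_r2 eo_r2 z by auto
      have "{c2 z, c0 z, c1 z} = {0,1,2}" "{c2 (g z), c0 z, c1 z} = {0,1,2}"
        using P1 P2 a by (auto simp: insert_commute)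
      then have "c2 (g z) = c2 z" using perm3 by metis
      then show ?thesis using a unfolding tri_def by simp
    qed
  qed
  obtain x0 where x0: "x0 \<in> \<Phi>" using neP by auto
  have const: "tri y = tri x0" if y: "y \<in> \<Phi>" for y
  proof -
    have "y \<in> gen_orb [r0, r1, r2] x0" using transit[OF x0 y] .
    then show ?thesis
    proof (induction rule: gen_orb_induct)
      case 1 show ?case by simp
    next
      case (2 z g)
      have "z \<in> \<Phi>" using OA.sub[OF x0] 2(1) by blast
      then show ?case using stp 2 by metis
    qed
  qed
  define s0 where "s0 = c0 x0"
  define s1 where "s1 = c1 x0"
  define s2 where "s2 = c2 x0"
  have S: "{s0, s1, s2} = {0,1,2}" unfolding s0_def s1_def s2_def using perm[OF x0] .
  have cc0: "c0 y = s0" and cc1: "c1 y = s1" and cc2: "c2 y = s2" if "y \<in> \<Phi>" for y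
    using const[OF that] unfolding tri_def s0_def s1_def s2_def by auto
  have BVc: "z \<in> ?BV \<longleftrightarrow> (fst z = 0 \<and> snd z \<in> VV) \<or> (fst z = 1 \<and> snd z \<in> EE) \<or> (fst z = 2 \<and> snd z \<in> FF)" for z
    unfolding bary_verts_def by (cases z) auto
  have col: "fst (\<pi> z) = (if fst z = 0 then s0 else if fst z = 1 then s1 else s2)
     \<and> fst z \<in> {0,1,2}" if z: "z \<in> ?BV" for z
  proof -
    obtain c Ob where zz: "z = (c, Ob)" by (cases z)
    from z consider (a) y where "y \<in> \<Phi>" "c = 0" "Ob = vo y" | (b) y where "y \<in> \<Phi>" "c = 1" "Ob = eo y"
      | (c) y where "y \<in> \<Phi>" "c = 2" "Ob = fo y"
      unfolding zz bary_verts_def map_vertices_def map_edges_def map_faces_def by auto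
    then show ?thesis
    proof cases
      case a then show ?thesis using cc0[of y] unfolding c0_def zz by simp
    next
      case b then show ?thesis using cc1[of y] unfolding c1_def zz by simp
    next
      case c then show ?thesis using cc2[of y] unfolding c2_def zz by simp
    qed
  qed
  have piBV: "\<pi> z \<in> ?BV" if "z \<in> ?BV" for z using bij that bij_betwE by blast
  have inj: "inj_on \<pi> ?BV" using bij bij_betw_imp_inj_on by blast
  have EinBV: "(1, e) \<in> ?BV" if "e \<in> EE" for e using that BVc by simp
  have injE: "inj_on (\<lambda>e. snd (\<pi> (1, e))) EE" if "s1 = k" for k
  proof
    fix e e' assume e: "e \<in> EE" "e' \<in> EE" and eq: "snd (\<pi> (1, e)) = snd (\<pi> (1, e'))"
    have "fst (\<pi> (1, e)) = fst (\<pi> (1, e'))" using col[OF EinBV[OF e(1)]] col[OF EinBV[OF e(2)]] by simp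
    then have "\<pi> (1, e) = \<pi> (1, e')" using eq prod_eq_iff by blast
    then show "e = e'" using inj_onD[OF inj _ EinBV[OF e(1)] EinBV[OF e(2)]] by simp
  qed
  have "s1 \<noteq> 0"
  proof
    assume h: "s1 = 0"
    have "(\<lambda>e. snd (\<pi> (1, e))) ` EE \<subseteq> VV"
    proof
      fix w assume "w \<in> (\<lambda>e. snd (\<pi> (1, e))) ` EE"
      then obtain e where e: "e \<in> EE" "w = snd (\<pi> (1, e))" by auto
      show "w \<in> VV" using piBV[OF EinBV[OF e(1)]] col[OF EinBV[OF e(1)]] h e(2) BVc by auto
    qed
    then have "card EE \<le> card VV" using card_inj_on_le[OF injE[OF h] _ finV] by blast
    then show False using cntE cntV tcV by linarith
  qed
  moreover have "s1 \<noteq> 2"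
  proof
    assume h: "s1 = 2"
    have "(\<lambda>e. snd (\<pi> (1, e))) ` EE \<subseteq> FF"
    proof
      fix w assume "w \<in> (\<lambda>e. snd (\<pi> (1, e))) ` EE"
      then obtain e where e: "e \<in> EE" "w = snd (\<pi> (1, e))" by auto
      show "w \<in> FF" using piBV[OF EinBV[OF e(1)]] col[OF EinBV[OF e(1)]] h e(2) BVc by auto
    qed
    then have "card EE \<le> card FF" using card_inj_on_le[OF injE[OF h] _ finF] by blast
    then show False using cntE cntF FFpos by linarith
  qed
  moreover have "s1 \<in> {0,1,2}" using S by blast
  ultimately have "s1 = 1" by auto
  then have cs: "(s0 = 0 \<and> s2 = 2) \<or> (s0 = 2 \<and> s2 = 0)" using permc[OF S] by simp
  then show "\<pi> \<in> bary_aut_col \<Phi> r0 r1 r2 \<union> bary_aut_swap \<Phi> r0 r1 r2"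
  proof
    assume "s0 = 0 \<and> s2 = 2"
    then have "\<forall>x\<in>?BV. fst (\<pi> x) = fst x" using col \<open>s1 = 1\<close> by fastforce
    then show ?thesis using pi unfolding bary_aut_col_def by blast
  next
    assume "s0 = 2 \<and> s2 = 0"
    then have "\<forall>x\<in>?BV. (fst x = 0 \<longrightarrow> fst (\<pi> x) = 2) \<and> (fst x = 2 \<longrightarrow> fst (\<pi> x) = 0) \<and>
        (fst x = 1 \<longrightarrow> fst (\<pi> x) = 1)" using col \<open>s1 = 1\<close> by fastforce
    then show ?thesis using pi unfolding bary_aut_swap_def by blast
  qed
qed

end

theorem corollary1:
  fixes \<Phi> :: "'f set" and r0 r1 r2 :: "'f \<Rightarrow> 'f"
  assumes "polyhedral_map \<Phi> r0 r1 r2"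
  shows "bary_aut_uncol \<Phi> r0 r1 r2 = bary_aut_col \<Phi> r0 r1 r2 \<union> bary_aut_swap \<Phi> r0 r1 r2"
proof -
  interpret pm \<Phi> r0 r1 r2 using assms unfolding polyhedral_map_def by unfold_locales auto
  show ?thesis using main unfolding bary_aut_col_def bary_aut_swap_def by blast
qed

end
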